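(* Let $\Gamma$ be a distance-regular graph with valency $k$ and smallest eigenvalue $\theta_{\min}$. If $\Gamma$ has the SPLS$(s)$ property for an integer $s\ge2$, then $-\theta_{\min}\le s$, and if equality holds then $\Gamma$ is geometric. Moreover, if $\sigma$ is the smallest integer such that $\Gamma$ has the SPLS$(\sigma)$ property, then $\sigma(a_1+1)-k\le(c_2-1)\binom{\sigma}{2}$ and $\sigma\ge-\theta_{\min}$.
   Context: $\Gamma$ is distance-regular of diameter at least 2 with intersection numbers $b_i,c_i$, $k=b_0$, $a_i=k-b_i-c_i$. Partial linear space: points and lines, any two distinct points on at most one common line; point graph: points adjacent iff on a common line. $\tau(X)$: maximum over non-incident point $x$ and line $\ell$ of the number of points of $\ell$ collinear with $x$. For integers $c\ge1,s\ge2$, $\Gamma$ has the SPLS$(c,s)$ property if $\Gamma$ is the point graph of a partial linear space $X=(V(\Gamma),\mathcal L,\in)$ with $\mathcal L$ the set of all maximal cliques with at least $a_1+2-(c-1)(s-1)$ vertices, $a_1\ge(2s-1)(c-1)$, each vertex on at most $s$ lines, and $\tau(X)\le c$; SPLS$(s)$ means SPLS$(c_2,s)$. A Delsarte clique is a clique with $1+\frac{k}{-\theta_{\min}}$ vertices; $\Gamma$ is geometric if there is a set of Delsarte cliques such that every edge lies in exactly one of them. *)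

theory Defs
  imports Complex_Main
begin

definition graph :: "'a set \<Rightarrow> ('a \<Rightarrow> 'a \<Rightarrow> bool) \<Rightarrow> bool" where
  "graph V E \<longleftrightarrow> finite V \<and> (\<forall>x y. E x y \<longrightarrow> x \<in> V \<and> y \<in> V) \<and>
     (\<forall>x y. E x y \<longrightarrow> E y x) \<and> (\<forall>x. \<not> E x x)"

fun reach :: "'a set \<Rightarrow> ('a \<Rightarrow> 'a \<Rightarrow> bool) \<Rightarrow> nat \<Rightarrow> 'a \<Rightarrow> 'a \<Rightarrow> bool" where
  "reach V E 0 x y = (x = y)"
| "reach V E (Suc n) x y = (reach V E n x y \<or> (\<exists>z\<in>V. reach V E n x z \<and> E z y))"

definition gdist :: "'a set \<Rightarrow> ('a \<Rightarrow> 'a \<Rightarrow> bool) \<Rightarrow> 'a \<Rightarrow> 'a \<Rightarrow> nat" where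
  "gdist V E x y = (LEAST n. reach V E n x y)"

definition connected_graph :: "'a set \<Rightarrow> ('a \<Rightarrow> 'a \<Rightarrow> bool) \<Rightarrow> bool" where
  "connected_graph V E \<longleftrightarrow> (\<forall>x\<in>V. \<forall>y\<in>V. \<exists>n. reach V E n x y)"

definition c_set :: "'a set \<Rightarrow> ('a \<Rightarrow> 'a \<Rightarrow> bool) \<Rightarrow> 'a \<Rightarrow> 'a \<Rightarrow> 'a set" where
  "c_set V E x y = {z \<in> V. E y z \<and> gdist V E x z + 1 = gdist V E x y}"

definition b_set :: "'a set \<Rightarrow> ('a \<Rightarrow> 'a \<Rightarrow> bool) \<Rightarrow> 'a \<Rightarrow> 'a \<Rightarrow> 'a set" where
  "b_set V E x y = {z \<in> V. E y z \<and> gdist V E x z = gdist V E x y + 1}"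

definition distance_regular :: "'a set \<Rightarrow> ('a \<Rightarrow> 'a \<Rightarrow> bool) \<Rightarrow> bool" where
  "distance_regular V E \<longleftrightarrow> graph V E \<and> V \<noteq> {} \<and> connected_graph V E \<and>
     (\<forall>x\<in>V. \<forall>y\<in>V. \<forall>x'\<in>V. \<forall>y'\<in>V. gdist V E x y = gdist V E x' y' \<longrightarrow>
        card (c_set V E x y) = card (c_set V E x' y') \<and>
        card (b_set V E x y) = card (b_set V E x' y'))"

definition diameter_ge2 :: "'a set \<Rightarrow> ('a \<Rightarrow> 'a \<Rightarrow> bool) \<Rightarrow> bool" where
  "diameter_ge2 V E \<longleftrightarrow> (\<exists>x\<in>V. \<exists>y\<in>V. gdist V E x y \<ge> 2)"

text \<open>Intersection numbers, read off at some pair at distance i (well defined for a DRG).\<close>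
definition dpair :: "'a set \<Rightarrow> ('a \<Rightarrow> 'a \<Rightarrow> bool) \<Rightarrow> nat \<Rightarrow> 'a \<times> 'a" where
  "dpair V E i = (SOME p. fst p \<in> V \<and> snd p \<in> V \<and> gdist V E (fst p) (snd p) = i)"

definition int_c :: "'a set \<Rightarrow> ('a \<Rightarrow> 'a \<Rightarrow> bool) \<Rightarrow> nat \<Rightarrow> nat" where
  "int_c V E i = card (c_set V E (fst (dpair V E i)) (snd (dpair V E i)))"

definition int_b :: "'a set \<Rightarrow> ('a \<Rightarrow> 'a \<Rightarrow> bool) \<Rightarrow> nat \<Rightarrow> nat" where
  "int_b V E i = card (b_set V E (fst (dpair V E i)) (snd (dpair V E i)))"

definition valency :: "'a set \<Rightarrow> ('a \<Rightarrow> 'a \<Rightarrow> bool) \<Rightarrow> nat" where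
  "valency V E = int_b V E 0"

definition int_a :: "'a set \<Rightarrow> ('a \<Rightarrow> 'a \<Rightarrow> bool) \<Rightarrow> nat \<Rightarrow> int" where
  "int_a V E i = int (valency V E) - int (int_b V E i) - int (int_c V E i)"

text \<open>Eigenvalues of the adjacency matrix (as eigenvalues of the adjacency operator on
  real functions on V).\<close>
definition adj_eigenvalue :: "'a set \<Rightarrow> ('a \<Rightarrow> 'a \<Rightarrow> bool) \<Rightarrow> real \<Rightarrow> bool" where
  "adj_eigenvalue V E \<theta> \<longleftrightarrow> (\<exists>f :: 'a \<Rightarrow> real. (\<exists>x\<in>V. f x \<noteq> 0) \<and>
      (\<forall>x\<in>V. (\<Sum>y\<in>{y\<in>V. E x y}. f y) = \<theta> * f x))"

definition theta_min :: "'a set \<Rightarrow> ('a \<Rightarrow> 'a \<Rightarrow> bool) \<Rightarrow> real" where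
  "theta_min V E = Min {\<theta>. adj_eigenvalue V E \<theta>}"

definition clique :: "'a set \<Rightarrow> ('a \<Rightarrow> 'a \<Rightarrow> bool) \<Rightarrow> 'a set \<Rightarrow> bool" where
  "clique V E C \<longleftrightarrow> C \<subseteq> V \<and> (\<forall>x\<in>C. \<forall>y\<in>C. x \<noteq> y \<longrightarrow> E x y)"

definition maximal_clique :: "'a set \<Rightarrow> ('a \<Rightarrow> 'a \<Rightarrow> bool) \<Rightarrow> 'a set \<Rightarrow> bool" where
  "maximal_clique V E C \<longleftrightarrow> clique V E C \<and> (\<forall>D. clique V E D \<and> C \<subseteq> D \<longrightarrow> D = C)"

definition delsarte_clique :: "'a set \<Rightarrow> ('a \<Rightarrow> 'a \<Rightarrow> bool) \<Rightarrow> 'a set \<Rightarrow> bool" where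
  "delsarte_clique V E C \<longleftrightarrow> clique V E C \<and>
     real (card C) = 1 + real (valency V E) / (- theta_min V E)"

definition geometric :: "'a set \<Rightarrow> ('a \<Rightarrow> 'a \<Rightarrow> bool) \<Rightarrow> bool" where
  "geometric V E \<longleftrightarrow> (\<exists>\<C>. (\<forall>C\<in>\<C>. delsarte_clique V E C) \<and>
      (\<forall>x y. E x y \<longrightarrow> (\<exists>!C. C \<in> \<C> \<and> x \<in> C \<and> y \<in> C)))"

definition spls_lines :: "'a set \<Rightarrow> ('a \<Rightarrow> 'a \<Rightarrow> bool) \<Rightarrow> nat \<Rightarrow> nat \<Rightarrow> 'a set set" where
  "spls_lines V E c s = {C. maximal_clique V E C \<and>
      int (card C) \<ge> int_a V E 1 + 2 - (int c - 1) * (int s - 1)}"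

definition SPLS :: "'a set \<Rightarrow> ('a \<Rightarrow> 'a \<Rightarrow> bool) \<Rightarrow> nat \<Rightarrow> nat \<Rightarrow> bool" where
  "SPLS V E c s \<longleftrightarrow> c \<ge> 1 \<and> s \<ge> 2 \<and>
    (let L = spls_lines V E c s in
      \<comment> \<open>partial linear space: two distinct points on at most one common line\<close>
      (\<forall>x\<in>V. \<forall>y\<in>V. x \<noteq> y \<longrightarrow> card {l \<in> L. x \<in> l \<and> y \<in> l} \<le> 1) \<and>
      \<comment> \<open>Gamma is the point graph\<close>
      (\<forall>x\<in>V. \<forall>y\<in>V. x \<noteq> y \<longrightarrow> (E x y \<longleftrightarrow> (\<exists>l\<in>L. x \<in> l \<and> y \<in> l))) \<and>
      int_a V E 1 \<ge> (2 * int s - 1) * (int c - 1) \<and>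
      (\<forall>x\<in>V. card {l \<in> L. x \<in> l} \<le> s) \<and>
      \<comment> \<open>tau(X) \<le> c: collinear = adjacent in the point graph\<close>
      (\<forall>x\<in>V. \<forall>l\<in>L. x \<notin> l \<longrightarrow> card {y \<in> l. E x y} \<le> c))"

definition SPLS_s :: "'a set \<Rightarrow> ('a \<Rightarrow> 'a \<Rightarrow> bool) \<Rightarrow> nat \<Rightarrow> bool" where
  "SPLS_s V E s \<longleftrightarrow> SPLS V E (int_c V E 2) s"

end

theory Submission
  imports Defs "Jordan_Normal_Form.Char_Poly"
begin


lemma sum_nth_distinct:
  "distinct xs \<Longrightarrow> (\<Sum>j<length xs. g (xs!j)) = (\<Sum>y\<in>set xs. (g y::real))"
  by (simp add: bij_betw_nth sum.reindex_bij_betw)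

lemma eig_finite:
  assumes "finite V"
  shows "finite {\<theta>. adj_eigenvalue V E \<theta>}"
proof -
  obtain xs where xs: "set xs = V" "distinct xs" using assms finite_distinct_list by blast
  define n where "n = length xs"
  define A :: "real mat" where "A = mat n n (\<lambda>(i,j). if E (xs!i) (xs!j) then 1 else 0)"
  have Ac: "A \<in> carrier_mat n n" unfolding A_def by simp
  have "{\<theta>. adj_eigenvalue V E \<theta>} \<subseteq> {x. poly (char_poly A) x = 0}"
  proof
    fix \<theta> assume "\<theta> \<in> {\<theta>. adj_eigenvalue V E \<theta>}"
    then obtain f :: "'a \<Rightarrow> real" where f: "\<exists>x\<in>V. f x \<noteq> 0"
      "\<forall>x\<in>V. (\<Sum>y\<in>{y\<in>V. E x y}. f y) = \<theta> * f x"
      unfolding adj_eigenvalue_def by auto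
    define v where "v = vec n (\<lambda>i. f (xs!i))"
    have vc: "v \<in> carrier_vec n" unfolding v_def by simp
    have "v \<noteq> 0\<^sub>v n"
    proof
      assume v0: "v = 0\<^sub>v n"
      obtain x where "x \<in> V" "f x \<noteq> 0" using f by auto
      then obtain i where "i < n" "xs!i = x" using xs unfolding n_def by (metis in_set_conv_nth)
      then have "v $ i = f x" unfolding v_def by simp
      with v0 \<open>i<n\<close> \<open>f x \<noteq> 0\<close> show False by simp
    qed
    moreover have "A *\<^sub>v v = \<theta> \<cdot>\<^sub>v v"
    proof (rule eq_vecI)
      fix i assume i: "i < dim_vec (\<theta> \<cdot>\<^sub>v v)"
      then have i': "i < n" unfolding v_def by simp
      have "(A *\<^sub>v v) $ i = (\<Sum>j<n. (if E (xs!i) (xs!j) then 1 else 0) * f (xs!j))"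
        using i' unfolding A_def v_def by (simp add: mult_mat_vec_def scalar_prod_def lessThan_atLeast0)
      also have "\<dots> = (\<Sum>y\<in>V. (if E (xs!i) y then 1 else 0) * f y)"
        using xs sum_nth_distinct[of xs "\<lambda>y. (if E (xs!i) y then 1 else 0) * f y"] unfolding n_def by simp
      also have "\<dots> = (\<Sum>y\<in>{y\<in>V. E (xs!i) y}. f y)"
        using assms by (simp add: sum.inter_filter, intro sum.cong, auto)
      also have "\<dots> = \<theta> * f (xs!i)" using f(2) xs i' unfolding n_def by auto
      finally show "(A *\<^sub>v v) $ i = (\<theta> \<cdot>\<^sub>v v) $ i" using i' unfolding v_def by simp
    qed (use Ac vc in auto)
    ultimately have "eigenvalue A \<theta>" unfolding eigenvalue_def eigenvector_def using Ac vc by auto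
    then show "\<theta> \<in> {x. poly (char_poly A) x = 0}" using eigenvalue_root_char_poly[OF Ac] by simp
  qed
  moreover have "char_poly A \<noteq> 0" using degree_monic_char_poly[OF Ac] by auto
  ultimately show ?thesis using poly_roots_finite finite_subset by blast
qed


locale drg =
  fixes V :: "'a set" and E :: "'a \<Rightarrow> 'a \<Rightarrow> bool"
  assumes drg: "distance_regular V E" and diam: "diameter_ge2 V E"
begin

abbreviation d where "d \<equiv> gdist V E"
definition N where "N x = {y\<in>V. E x y}"
abbreviation k where "k \<equiv> valency V E"

lemma fin: "finite V" using drg unfolding distance_regular_def graph_def by auto
lemma sym: "E x y \<Longrightarrow> E y x" using drg unfolding distance_regular_def graph_def by auto
lemma irr: "\<not> E x x" using drg unfolding distance_regular_def graph_def by auto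
lemma inV: "E x y \<Longrightarrow> x \<in> V \<and> y \<in> V" using drg unfolding distance_regular_def graph_def by auto
lemma conn: "x \<in> V \<Longrightarrow> y \<in> V \<Longrightarrow> \<exists>n. reach V E n x y"
  using drg unfolding distance_regular_def connected_graph_def by auto
lemma Vne: "V \<noteq> {}" using drg unfolding distance_regular_def by auto

lemma reach_mono: "reach V E n x y \<Longrightarrow> reach V E (n + m) x y"
  by (induction m) auto

lemma reach_mono': "reach V E n x y \<Longrightarrow> n \<le> m \<Longrightarrow> reach V E m x y"
  using reach_mono[of n x y "m - n"] by simp

lemma reach_trans: "reach V E m x y \<Longrightarrow> reach V E n y z \<Longrightarrow> reach V E (m + n) x z"
proof (induction n arbitrary: z)
  case 0 then show ?case by simp
next
  case (Suc n)
  from Suc.prems(2) have "reach V E n y z \<or> (\<exists>w\<in>V. reach V E n y w \<and> E w z)" by simp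
  then show ?case
  proof
    assume "reach V E n y z" then show ?thesis using Suc by simp
  next
    assume "\<exists>w\<in>V. reach V E n y w \<and> E w z"
    then obtain w where "w \<in> V" "reach V E n y w" "E w z" by blast
    then show ?thesis using Suc.IH[of w] Suc.prems(1) by auto
  qed
qed

lemma reach_edge: "E x y \<Longrightarrow> reach V E 1 x y"
  using inV by auto

lemma reach_sym: "reach V E n x y \<Longrightarrow> reach V E n y x"
proof (induction n arbitrary: y)
  case 0 then show ?case by simp
next
  case (Suc n)
  from Suc.prems have "reach V E n x y \<or> (\<exists>w\<in>V. reach V E n x w \<and> E w y)" by simp
  then show ?case
  proof
    assume "reach V E n x y" then show ?thesis using Suc.IH by simp
  next
    assume "\<exists>w\<in>V. reach V E n x w \<and> E w y"
    then obtain w where "w \<in> V" "reach V E n x w" "E w y" by blast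
    then have "reach V E 1 y w" "reach V E n w x" using Suc.IH reach_edge sym by auto
    from reach_trans[OF this] show ?thesis by simp
  qed
qed

lemma d_reach: "x \<in> V \<Longrightarrow> y \<in> V \<Longrightarrow> reach V E (d x y) x y"
  unfolding gdist_def using conn by (metis LeastI_ex)

lemma d_le: "reach V E n x y \<Longrightarrow> d x y \<le> n"
  unfolding gdist_def by (rule Least_le)

lemma d_refl[simp]: "d x x = 0"
  using d_le[of 0 x x] by simp

lemma d_zero: "x \<in> V \<Longrightarrow> y \<in> V \<Longrightarrow> d x y = 0 \<longleftrightarrow> x = y"
  using d_reach[of x y] by auto

lemma d_sym: "x \<in> V \<Longrightarrow> y \<in> V \<Longrightarrow> d x y = d y x"
  using d_reach d_le reach_sym by (meson le_antisym)

lemma d_tri: "x \<in> V \<Longrightarrow> y \<in> V \<Longrightarrow> z \<in> V \<Longrightarrow> d x z \<le> d x y + d y z"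
  using d_reach d_le reach_trans by meson

lemma d_edge: "E x y \<Longrightarrow> d x y = 1"
proof -
  assume e: "E x y"
  then have "d x y \<le> 1" using d_le reach_edge by blast
  moreover have "x \<noteq> y" using e irr by auto
  then have "d x y \<noteq> 0" using d_zero inV e by auto
  ultimately show ?thesis by simp
qed

lemma d_one: "x \<in> V \<Longrightarrow> y \<in> V \<Longrightarrow> d x y = 1 \<Longrightarrow> E x y"
proof -
  assume xy: "x \<in> V" "y \<in> V" "d x y = 1"
  then have "reach V E 1 x y" using d_reach by metis
  then have "x = y \<or> E x y" by auto
  moreover have "x \<noteq> y" using xy by auto
  ultimately show ?thesis by simp
qed

lemma d_one_iff: "x \<in> V \<Longrightarrow> y \<in> V \<Longrightarrow> d x y = 1 \<longleftrightarrow> E x y"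
  using d_one d_edge by blast

lemma d_nbr: "E y z \<Longrightarrow> x \<in> V \<Longrightarrow> d x z \<le> d x y + 1 \<and> d x y \<le> d x z + 1"
proof -
  assume e: "E y z" and x: "x \<in> V"
  have yz: "y \<in> V" "z \<in> V" using inV e by auto
  have "d y z = 1" "d z y = 1" using d_edge e sym by auto
  then show ?thesis using d_tri[OF x yz(1) yz(2)] d_tri[OF x yz(2) yz(1)] by simp
qed

lemma d_pred: "x \<in> V \<Longrightarrow> y \<in> V \<Longrightarrow> d x y = Suc m \<Longrightarrow> \<exists>z\<in>V. E y z \<and> d x z = m"
proof -
  assume xy: "x \<in> V" "y \<in> V" "d x y = Suc m"
  then have "reach V E (Suc m) x y" using d_reach by metis
  then have "reach V E m x y \<or> (\<exists>z\<in>V. reach V E m x z \<and> E z y)" by simp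
  moreover have "\<not> reach V E m x y" using d_le xy by fastforce
  ultimately obtain z where z: "z \<in> V" "reach V E m x z" "E z y" by blast
  then have "d x z \<le> m" using d_le by blast
  moreover have "d x y \<le> d x z + 1" using d_nbr[OF z(3) xy(1)] by simp
  ultimately show ?thesis using z xy sym by (intro bexI[of _ z]) auto
qed

definition D where "D = Max {d x y | x y. x \<in> V \<and> y \<in> V}"

lemma dset_fin: "finite {d x y | x y. x \<in> V \<and> y \<in> V}"
proof -
  have "{d x y | x y. x \<in> V \<and> y \<in> V} = (\<lambda>(x,y). d x y) ` (V \<times> V)" by auto
  then show ?thesis using fin by simp
qed

lemma d_le_D: "x \<in> V \<Longrightarrow> y \<in> V \<Longrightarrow> d x y \<le> D"
  unfolding D_def using dset_fin by (intro Max_ge) auto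

lemma D_att: "\<exists>x\<in>V. \<exists>y\<in>V. d x y = D"
proof -
  have "D \<in> {d x y | x y. x \<in> V \<and> y \<in> V}" unfolding D_def using dset_fin Vne
    by (intro Max_in) auto
  then obtain x y where "D = d x y" "x \<in> V" "y \<in> V" by blast
  then show ?thesis by metis
qed

lemma D_ge2: "D \<ge> 2"
  using diam d_le_D unfolding diameter_ge2_def by force

lemma dist_down: "x \<in> V \<Longrightarrow> \<forall>y\<in>V. d x y = m \<longrightarrow> i \<le> m \<longrightarrow> (\<exists>z\<in>V. d x z = i)"
proof (induction m)
  case 0 then show ?case by auto
next
  case (Suc m)
  show ?case
  proof (intro ballI impI)
    fix y assume y: "y \<in> V" "d x y = Suc m" "i \<le> Suc m"
    show "\<exists>z\<in>V. d x z = i"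
    proof (cases "i = Suc m")
      case True then show ?thesis using y by auto
    next
      case False
      obtain z where "z \<in> V" "d x z = m" using d_pred[OF Suc.prems y(1,2)] by auto
      then show ?thesis using Suc False y by auto
    qed
  qed
qed

lemma pair_ex: "i \<le> D \<Longrightarrow> \<exists>x\<in>V. \<exists>y\<in>V. d x y = i"
  using D_att dist_down by blast

lemma dpair: "i \<le> D \<Longrightarrow> fst (dpair V E i) \<in> V \<and> snd (dpair V E i) \<in> V \<and>
   d (fst (dpair V E i)) (snd (dpair V E i)) = i"
proof -
  assume "i \<le> D"
  then obtain x y where "x \<in> V" "y \<in> V" "d x y = i" using pair_ex by blast
  then have "\<exists>p. fst p \<in> V \<and> snd p \<in> V \<and> d (fst p) (snd p) = i" by (intro exI[of _ "(x,y)"]) auto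
  then show ?thesis unfolding dpair_def by (rule someI_ex)
qed

lemma b_eq: "x \<in> V \<Longrightarrow> y \<in> V \<Longrightarrow> card (b_set V E x y) = int_b V E (d x y)"
proof -
  assume xy: "x \<in> V" "y \<in> V"
  then have "d x y \<le> D" by (rule d_le_D)
  from dpair[OF this] show ?thesis using drg xy unfolding distance_regular_def int_b_def by metis
qed

lemma c_eq: "x \<in> V \<Longrightarrow> y \<in> V \<Longrightarrow> card (c_set V E x y) = int_c V E (d x y)"
proof -
  assume xy: "x \<in> V" "y \<in> V"
  then have "d x y \<le> D" by (rule d_le_D)
  from dpair[OF this] show ?thesis using drg xy unfolding distance_regular_def int_c_def by metis
qed

lemma N_fin: "finite (N x)" unfolding N_def using fin by simp

lemma b_set_self: "x \<in> V \<Longrightarrow> b_set V E x x = N x"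
  unfolding b_set_def N_def using d_one_iff by auto

lemma deg: "x \<in> V \<Longrightarrow> card (N x) = k"
  using b_eq[of x x] b_set_self[of x] unfolding valency_def by simp

lemma c0: "int_c V E 0 = 0"
proof -
  obtain x where "x \<in> V" using Vne by auto
  moreover have "c_set V E x x = {}" unfolding c_set_def by auto
  ultimately show ?thesis using c_eq[of x x] by simp
qed

lemma c_set_adj: "E x y \<Longrightarrow> c_set V E x y = {x}"
  unfolding c_set_def using d_edge d_zero inV sym by fastforce

lemma c1: "int_c V E 1 = 1"
proof -
  have "1 \<le> D" using D_ge2 by simp
  then obtain x y where xy: "x \<in> V" "y \<in> V" "d x y = 1" using pair_ex by blast
  then have "E x y" using d_one by auto
  then show ?thesis using c_eq[OF xy(1,2)] xy c_set_adj by simp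
qed

definition a_set where "a_set x y = {z\<in>V. E y z \<and> d x z = d x y}"

lemma nbr_split: "x \<in> V \<Longrightarrow> N y = c_set V E x y \<union> a_set x y \<union> b_set V E x y"
  unfolding N_def c_set_def a_set_def b_set_def using d_nbr by force

lemma a_card: "x \<in> V \<Longrightarrow> y \<in> V \<Longrightarrow>
  card (a_set x y) + int_b V E (d x y) + int_c V E (d x y) = k"
proof -
  assume xy: "x \<in> V" "y \<in> V"
  have f: "finite (c_set V E x y)" "finite (a_set x y)" "finite (b_set V E x y)"
    unfolding c_set_def a_set_def b_set_def using fin by auto
  have "card (N y) = card (c_set V E x y \<union> a_set x y \<union> b_set V E x y)" using nbr_split xy by simp
  also have "\<dots> = card (c_set V E x y) + card (a_set x y) + card (b_set V E x y)"
  proof -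
    have d1: "c_set V E x y \<inter> a_set x y = {}" unfolding c_set_def a_set_def by auto
    have d2: "(c_set V E x y \<union> a_set x y) \<inter> b_set V E x y = {}" unfolding c_set_def a_set_def b_set_def by auto
    show ?thesis using card_Un_disjoint[OF _ _ d2] card_Un_disjoint[OF _ _ d1] f by simp
  qed
  finally show ?thesis using deg xy b_eq c_eq by simp
qed

end


context drg begin

definition br where "br i = real (int_b V E i)"
definition cr where "cr i = real (int_c V E i)"
definition ar where "ar i = real k - br i - cr i"

lemma cr0: "cr 0 = 0" unfolding cr_def using c0 by simp

lemma sum_const_on: "(\<And>y. y \<in> A \<Longrightarrow> f y = c) \<Longrightarrow> (\<Sum>y\<in>A. f y) = real (card A) * (c::real)"
  by simp

lemma sum_nbr:
  assumes x: "x \<in> V" and z: "z \<in> V"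
  shows "(\<Sum>y\<in>N x. F (d z y)) = cr (d z x) * F (d z x - 1) + ar (d z x) * F (d z x) + br (d z x) * F (d z x + 1)"
proof -
  let ?C = "c_set V E z x" and ?A = "a_set z x" and ?B = "b_set V E z x"
  let ?j = "d z x"
  have f: "finite ?C" "finite ?A" "finite ?B"
    unfolding c_set_def a_set_def b_set_def using fin by auto
  have d1: "?C \<inter> ?A = {}" unfolding c_set_def a_set_def by auto
  have d2: "(?C \<union> ?A) \<inter> ?B = {}" unfolding c_set_def a_set_def b_set_def by auto
  have "(\<Sum>y\<in>N x. F (d z y)) = (\<Sum>y\<in>?C. F (d z y)) + (\<Sum>y\<in>?A. F (d z y)) + (\<Sum>y\<in>?B. F (d z y))"
    using nbr_split[OF z, of x] sum.union_disjoint[OF _ _ d2, of "\<lambda>y. F (d z y)"] sum.union_disjoint[OF _ _ d1, of "\<lambda>y. F (d z y)"] f by simp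
  also have "(\<Sum>y\<in>?C. F (d z y)) = real (card ?C) * F (?j - 1)"
  proof (rule sum_const_on)
    fix y assume "y \<in> ?C"
    then have "d z y = ?j - 1" unfolding c_set_def by auto
    then show "F (d z y) = F (?j - 1)" by simp
  qed
  also have "(\<Sum>y\<in>?A. F (d z y)) = real (card ?A) * F ?j"
    by (rule sum_const_on) (auto simp: a_set_def)
  also have "(\<Sum>y\<in>?B. F (d z y)) = real (card ?B) * F (?j + 1)"
    by (rule sum_const_on) (auto simp: b_set_def)
  finally have eq: "(\<Sum>y\<in>N x. F (d z y)) = real (card ?C) * F (?j - 1) + real (card ?A) * F ?j + real (card ?B) * F (?j + 1)" .
  have "real (card ?A + int_b V E ?j + int_c V E ?j) = real k" using a_card[OF z x] by simp
  then have cA: "real (card ?A) = ar ?j" unfolding ar_def br_def cr_def by simp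
  have cC: "real (card ?C) = cr ?j" unfolding cr_def using c_eq[OF z x] by simp
  have cB: "real (card ?B) = br ?j" unfolding br_def using b_eq[OF z x] by simp
  show ?thesis unfolding eq cA cB cC ..
qed

definition eig where "eig g \<theta> \<longleftrightarrow> (\<forall>x\<in>V. (\<Sum>y\<in>N x. g y) = \<theta> * g x)"
definition Sph where "Sph x i = {y\<in>V. d x y = i}"
definition S where "S g x i = (\<Sum>y\<in>Sph x i. (g y :: real))"

lemma Sph_fin: "finite (Sph x i)" unfolding Sph_def using fin by simp

lemma sum_if_Sph: "(\<Sum>z\<in>V. g z * (if d x z = m then \<alpha> else 0)) = \<alpha> * S g x m"
proof -
  have "(\<Sum>z\<in>V. g z * (if d x z = m then \<alpha> else 0)) = (\<Sum>z\<in>V. if d x z = m then \<alpha> * g z else 0)"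
    by (intro sum.cong) auto
  also have "\<dots> = (\<Sum>z\<in>Sph x m. \<alpha> * g z)" unfolding Sph_def using fin by (simp add: sum.inter_filter)
  finally show ?thesis unfolding S_def by (simp add: sum_distrib_left)
qed

lemma SR:
  assumes g: "eig g \<theta>" and x: "x \<in> V"
  shows "\<theta> * S g x i = cr (i+1) * S g x (i+1) + ar i * S g x i + (if i = 0 then 0 else br (i-1) * S g x (i-1))"
proof -
  have "\<theta> * S g x i = (\<Sum>y\<in>Sph x i. \<theta> * g y)" unfolding S_def by (simp add: sum_distrib_left)
  also have "\<dots> = (\<Sum>y\<in>Sph x i. \<Sum>z\<in>N y. g z)" using g unfolding eig_def Sph_def by auto
  also have "\<dots> = (\<Sum>y\<in>Sph x i. \<Sum>z\<in>V. if E y z then g z else 0)"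
    unfolding N_def using fin by (simp add: sum.inter_filter)
  also have "\<dots> = (\<Sum>z\<in>V. \<Sum>y\<in>Sph x i. if E y z then g z else 0)" by (rule sum.swap)
  also have "\<dots> = (\<Sum>z\<in>V. g z * (\<Sum>y\<in>N z. (\<lambda>t. if t = i then 1 else 0) (d x y)))"
  proof (intro sum.cong refl)
    fix z assume z: "z \<in> V"
    have "(\<Sum>y\<in>Sph x i. if E y z then g z else 0) = (\<Sum>y\<in>{y\<in>Sph x i. E y z}. g z)"
      by (rule sum.inter_filter[symmetric, OF Sph_fin])
    also have "{y\<in>Sph x i. E y z} = {y\<in>N z. d x y = i}" unfolding Sph_def N_def using sym by auto
    also have "(\<Sum>y\<in>{y\<in>N z. d x y = i}. g z) = g z * (\<Sum>y\<in>N z. (\<lambda>t. if t = i then 1 else 0) (d x y))"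
      using N_fin by (simp add: sum.inter_filter[symmetric])
    finally show "(\<Sum>y\<in>Sph x i. if E y z then g z else 0) = g z * (\<Sum>y\<in>N z. (\<lambda>t. if t = i then 1 else 0) (d x y))" .
  qed
  also have "\<dots> = (\<Sum>z\<in>V. g z * ((if d x z = i+1 then cr (i+1) else 0) + (if d x z = i then ar i else 0)
       + (if i = 0 then 0 else (if d x z = i - 1 then br (i-1) else 0))))"
  proof (intro sum.cong refl)
    fix z assume z: "z \<in> V"
    show "g z * (\<Sum>y\<in>N z. (\<lambda>t. if t = i then 1 else 0) (d x y)) = g z * ((if d x z = i+1 then cr (i+1) else 0) + (if d x z = i then ar i else 0)
       + (if i = 0 then 0 else (if d x z = i - 1 then br (i-1) else 0)))"
      using sum_nbr[OF z x, of "\<lambda>t. if t = i then (1::real) else 0"] cr0 by (cases "d x z"; cases i) auto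
  qed
  also have "\<dots> = (\<Sum>z\<in>V. g z * (if d x z = i+1 then cr (i+1) else 0)) + (\<Sum>z\<in>V. g z * (if d x z = i then ar i else 0))
      + (if i = 0 then 0 else (\<Sum>z\<in>V. g z * (if d x z = i - 1 then br (i-1) else 0)))"
    by (simp add: distrib_left sum.distrib)
  finally show ?thesis unfolding sum_if_Sph .
qed

end


context drg begin

fun P :: "real \<Rightarrow> nat \<Rightarrow> real" where
  "P \<theta> 0 = 1"
| "P \<theta> (Suc 0) = \<theta>"
| "P \<theta> (Suc (Suc i)) = ((\<theta> - ar (Suc i)) * P \<theta> (Suc i) - br i * P \<theta> i) / cr (Suc (Suc i))"

lemma Sph0: "x \<in> V \<Longrightarrow> Sph x 0 = {x}" unfolding Sph_def using d_zero by auto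
lemma Sph1: "x \<in> V \<Longrightarrow> Sph x 1 = N x" unfolding Sph_def N_def using d_one_iff inV by auto
lemma Sph_empty: "x \<in> V \<Longrightarrow> D < i \<Longrightarrow> Sph x i = {}" unfolding Sph_def using d_le_D by fastforce

lemma cr_pos: "1 \<le> i \<Longrightarrow> i \<le> D \<Longrightarrow> cr i \<ge> 1"
proof -
  assume i: "1 \<le> i" "i \<le> D"
  then obtain x y where xy: "x \<in> V" "y \<in> V" "d x y = i" using pair_ex by blast
  obtain m where m: "i = Suc m" using i by (cases i) auto
  obtain z where "z \<in> V" "E y z" "d x z = m" using d_pred[OF xy(1,2)] xy m by auto
  then have "z \<in> c_set V E x y" unfolding c_set_def using xy m by auto
  moreover have "finite (c_set V E x y)" unfolding c_set_def using fin by auto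
  ultimately have "card (c_set V E x y) \<ge> 1" by (metis One_nat_def Suc_leI card_gt_0_iff empty_iff)
  then show ?thesis unfolding cr_def using c_eq[OF xy(1,2)] xy by simp
qed

lemma SP: assumes g: "eig g \<theta>" and x: "x \<in> V"
  shows "i \<le> D \<Longrightarrow> S g x i = P \<theta> i * g x"
proof (induction i rule: less_induct)
  case (less i)
  show ?case
  proof (cases i)
    case 0 then show ?thesis unfolding S_def using Sph0[OF x] by simp
  next
    case (Suc j)
    show ?thesis
    proof (cases j)
      case 0
      have "Sph x (Suc 0) = N x" using Sph1[OF x] by simp
      then show ?thesis using Suc 0 g x unfolding S_def eig_def by simp
    next
      case (Suc m)
      have i: "i = Suc (Suc m)" using Suc \<open>i = Suc j\<close> by simp
      have IH1: "S g x (Suc m) = P \<theta> (Suc m) * g x" using less i by simp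
      have IH0: "S g x m = P \<theta> m * g x" using less i by simp
      have sr: "\<theta> * S g x (Suc m) = cr (Suc (Suc m)) * S g x (Suc (Suc m)) + ar (Suc m) * S g x (Suc m) + br m * S g x m"
        using SR[OF g x, of "Suc m"] by simp
      have c: "cr (Suc (Suc m)) \<ge> 1" using cr_pos less i by simp
      have "S g x (Suc (Suc m)) = ((\<theta> - ar (Suc m)) * S g x (Suc m) - br m * S g x m) / cr (Suc (Suc m))"
        using sr c by (simp add: field_simps)
      then show ?thesis unfolding i IH1 IH0 by (simp add: field_simps)
    qed
  qed
qed

lemma eig_const: "eig (\<lambda>_. 1) (real k)"
  unfolding eig_def using deg by simp

lemma card_Sph: "x \<in> V \<Longrightarrow> i \<le> D \<Longrightarrow> real (card (Sph x i)) = P (real k) i"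
  using SP[OF eig_const, of x i] unfolding S_def by simp

lemma K_pos: "i \<le> D \<Longrightarrow> P (real k) i \<ge> 1"
proof -
  assume i: "i \<le> D"
  then obtain x y where xy: "x \<in> V" "y \<in> V" "d x y = i" using pair_ex by blast
  then have "y \<in> Sph x i" unfolding Sph_def by simp
  then have "card (Sph x i) \<ge> 1" using Sph_fin by (metis One_nat_def Suc_leI card_gt_0_iff empty_iff)
  then show ?thesis using card_Sph[OF xy(1) i] by simp
qed

lemma delta: assumes x: "x \<in> V"
  shows "br i * real (card (Sph x i)) = cr (i+1) * real (card (Sph x (i+1)))"
proof (induction i)
  case 0
  have "real k * real (card (Sph x 0)) = cr 1 * real (card (Sph x 1)) + ar 0 * real (card (Sph x 0))"
    using SR[OF eig_const x, of 0] unfolding S_def by simp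
  then show ?case unfolding ar_def using cr0 by (simp add: algebra_simps)
next
  case (Suc i)
  have "real k * real (card (Sph x (Suc i))) = cr (Suc (Suc i)) * real (card (Sph x (Suc (Suc i))))
     + ar (Suc i) * real (card (Sph x (Suc i))) + br i * real (card (Sph x i))"
    using SR[OF eig_const x, of "Suc i"] unfolding S_def by simp
  then show ?case using Suc.IH unfolding ar_def by (simp add: algebra_simps)
qed

lemma brD: "br D = 0"
proof -
  obtain x y where xy: "x \<in> V" "y \<in> V" "d x y = D" using pair_ex by blast
  have "b_set V E x y = {}" unfolding b_set_def using d_le_D[OF xy(1)] xy by fastforce
  then show ?thesis unfolding br_def using b_eq[OF xy(1,2)] xy by simp
qed

lemma k_pos: "k \<ge> 1"
proof -
  have "1 \<le> D" using D_ge2 by simp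
  then obtain x y where xy: "x \<in> V" "y \<in> V" "d x y = 1" using pair_ex by blast
  then have "y \<in> N x" unfolding N_def using d_one by auto
  then have "card (N x) \<ge> 1" using N_fin by (metis One_nat_def Suc_leI card_gt_0_iff empty_iff)
  then show ?thesis using deg xy by simp
qed

lemma P_k1: "P (real k) 1 = real k" by simp

definition u where "u \<theta> i = P \<theta> i / P (real k) i"

lemma PR:
  assumes g: "eig g \<theta>" and x0: "x0 \<in> V" "g x0 \<noteq> 0" and j: "j \<le> D"
  shows "\<theta> * P \<theta> j = (if j < D then cr (j+1) * P \<theta> (j+1) else 0) + ar j * P \<theta> j
            + (if j = 0 then 0 else br (j-1) * P \<theta> (j-1))"
proof -
  have s1: "S g x0 (j+1) = (if j < D then P \<theta> (j+1) * g x0 else 0)"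
  proof (cases "j < D")
    case True then show ?thesis using SP[OF g x0(1), of "j+1"] by simp
  next
    case False then have "Sph x0 (j+1) = {}" using Sph_empty[OF x0(1)] j by simp
    then show ?thesis using False unfolding S_def by simp
  qed
  have s0: "S g x0 j = P \<theta> j * g x0" using SP[OF g x0(1) j] .
  have s2: "j \<noteq> 0 \<Longrightarrow> S g x0 (j-1) = P \<theta> (j-1) * g x0" using SP[OF g x0(1), of "j-1"] j by simp
  have "\<theta> * S g x0 j = cr (j+1) * S g x0 (j+1) + ar j * S g x0 j + (if j = 0 then 0 else br (j-1) * S g x0 (j-1))"
    using SR[OF g x0(1)] .
  then have "(\<theta> * P \<theta> j) * g x0 = ((if j < D then cr (j+1) * P \<theta> (j+1) else 0) + ar j * P \<theta> j
            + (if j = 0 then 0 else br (j-1) * P \<theta> (j-1))) * g x0"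
    unfolding s1 s0 using s2 by (cases "j = 0"; cases "j < D") (simp_all add: algebra_simps)
  then show ?thesis using x0(2) by simp
qed

lemma phi_eig:
  assumes g: "eig g \<theta>" and x0: "x0 \<in> V" "g x0 \<noteq> 0" and z: "z \<in> V"
  shows "eig (\<lambda>x. u \<theta> (d z x)) \<theta>"
  unfolding eig_def
proof
  fix x assume x: "x \<in> V"
  define j where "j = d z x"
  have jD: "j \<le> D" unfolding j_def using d_le_D z x by simp
  let ?K = "P (real k)" and ?Q = "P \<theta>"
  have Kj: "?K j \<ge> 1" using K_pos jD .
  have c1: "br j * u \<theta> (j+1) = (if j < D then cr (j+1) * ?Q (j+1) / ?K j else 0)"
  proof (cases "j < D")
    case True
    have "br j * ?K j = cr (j+1) * ?K (j+1)" using delta[OF z, of j] card_Sph[OF z] jD True by simp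
    moreover have "?K (j+1) \<ge> 1" using K_pos True by simp
    ultimately show ?thesis using True Kj unfolding u_def by (simp add: field_simps)
  next
    case False then have "j = D" using jD by simp
    then show ?thesis using brD by simp
  qed
  have c2: "cr j * u \<theta> (j-1) = (if j = 0 then 0 else br (j-1) * ?Q (j-1) / ?K j)"
  proof (cases "j = 0")
    case True then show ?thesis using cr0 by simp
  next
    case False
    have "br (j-1) * ?K (j-1) = cr j * ?K j" using delta[OF z, of "j-1"] card_Sph[OF z] jD False by simp
    moreover have "?K (j-1) \<ge> 1" using K_pos jD by simp
    ultimately show ?thesis using False Kj unfolding u_def by (simp add: field_simps)
  qed
  have "(\<Sum>y\<in>N x. u \<theta> (d z y)) = cr j * u \<theta> (j-1) + ar j * u \<theta> j + br j * u \<theta> (j+1)"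
    using sum_nbr[OF x z] unfolding j_def .
  also have "\<dots> = ((if j < D then cr (j+1) * ?Q (j+1) else 0) + ar j * ?Q j
            + (if j = 0 then 0 else br (j-1) * ?Q (j-1))) / ?K j"
    unfolding c1 c2 using Kj by (simp add: u_def field_simps)
  also have "\<dots> = \<theta> * ?Q j / ?K j" using PR[OF g x0 jD] by simp
  finally show "(\<Sum>y\<in>N x. u \<theta> (d z y)) = \<theta> * u \<theta> (d z x)" unfolding u_def j_def by simp
qed

definition c0 where "c0 \<theta> = (\<Sum>i\<le>D. u \<theta> i * P \<theta> i)"

lemma M_act:
  assumes w: "eig w \<theta>" and x: "x \<in> V"
  shows "(\<Sum>z\<in>V. u \<theta> (d x z) * w z) = c0 \<theta> * w x"
proof -
  have im: "d x ` V \<subseteq> {..D}" using d_le_D[OF x] by auto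
  have "(\<Sum>z\<in>V. u \<theta> (d x z) * w z) = (\<Sum>i\<in>{..D}. \<Sum>z\<in>{z. z \<in> V \<and> d x z = i}. u \<theta> (d x z) * w z)"
    using sum.group[OF fin finite_atMost im, of "\<lambda>z. u \<theta> (d x z) * w z"] by simp
  also have "\<dots> = (\<Sum>i\<in>{..D}. u \<theta> i * S w x i)"
  proof (intro sum.cong refl)
    fix i
    have "{z. z \<in> V \<and> d x z = i} = Sph x i" unfolding Sph_def by auto
    then have "(\<Sum>z\<in>{z. z \<in> V \<and> d x z = i}. u \<theta> (d x z) * w z) = (\<Sum>z\<in>Sph x i. u \<theta> i * w z)"
      by (intro sum.cong) (auto simp: Sph_def)
    also have "\<dots> = u \<theta> i * S w x i" unfolding S_def by (rule sum_distrib_left[symmetric])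
    finally show "(\<Sum>z\<in>{z. z \<in> V \<and> d x z = i}. u \<theta> (d x z) * w z) = u \<theta> i * S w x i" .
  qed
  also have "\<dots> = (\<Sum>i\<in>{..D}. u \<theta> i * P \<theta> i * w x)"
    using SP[OF w x] by (intro sum.cong refl) simp
  also have "\<dots> = c0 \<theta> * w x" unfolding c0_def by (rule sum_distrib_right[symmetric])
  finally show ?thesis .
qed

lemma c0_pos: "c0 \<theta> \<ge> 1"
proof -
  have "u \<theta> 0 * P \<theta> 0 \<le> (\<Sum>i\<le>D. u \<theta> i * P \<theta> i)"
  proof (rule member_le_sum)
    fix i assume "i \<in> {..D} - {0}"
    then have "P (real k) i \<ge> 1" using K_pos by simp
    then show "0 \<le> u \<theta> i * P \<theta> i" unfolding u_def by (simp add: field_simps)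
  qed auto
  then show ?thesis unfolding c0_def u_def by simp
qed

lemma delsarte:
  assumes g: "eig g \<theta>" and x0: "x0 \<in> V" "g x0 \<noteq> 0" and neg: "\<theta> < 0" and C: "clique V E C"
  shows "real (card C) \<le> 1 + real k / (- \<theta>)"
proof (cases "C = {}")
  case True then show ?thesis using neg by (simp add: divide_nonneg_pos)
next
  case False
  have CV: "C \<subseteq> V" using C unfolding clique_def by auto
  have Cf: "finite C" using CV fin finite_subset by blast
  define w where "w x = (\<Sum>z\<in>C. u \<theta> (d z x))" for x
  have weig: "eig w \<theta>" unfolding eig_def
  proof
    fix x assume x: "x \<in> V"
    have "(\<Sum>y\<in>N x. w y) = (\<Sum>z\<in>C. \<Sum>y\<in>N x. u \<theta> (d z y))" unfolding w_def by (rule sum.swap)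
    also have "\<dots> = (\<Sum>z\<in>C. \<theta> * u \<theta> (d z x))"
      using phi_eig[OF g x0] CV x unfolding eig_def by (intro sum.cong refl) auto
    finally show "(\<Sum>y\<in>N x. w y) = \<theta> * w x" unfolding w_def by (simp add: sum_distrib_left)
  qed
  have "(\<Sum>x\<in>V. w x * w x) = (\<Sum>x\<in>V. \<Sum>z\<in>C. u \<theta> (d z x) * w x)"
    unfolding w_def by (simp add: sum_distrib_right)
  also have "\<dots> = (\<Sum>z\<in>C. \<Sum>x\<in>V. u \<theta> (d z x) * w x)" by (rule sum.swap)
  also have "\<dots> = (\<Sum>z\<in>C. c0 \<theta> * w z)" using M_act[OF weig] CV by (intro sum.cong refl) auto
  finally have eqw: "(\<Sum>x\<in>V. w x * w x) = c0 \<theta> * (\<Sum>z\<in>C. w z)" by (simp add: sum_distrib_left)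
  have "(\<Sum>x\<in>V. w x * w x) \<ge> 0" by (intro sum_nonneg) simp
  then have "c0 \<theta> * (\<Sum>z\<in>C. w z) \<ge> 0" using eqw by simp
  then have ws: "(\<Sum>z\<in>C. w z) \<ge> 0" using c0_pos[of \<theta>]
  proof -
    have "c0 \<theta> > 0" using c0_pos[of \<theta>] by simp
    then show ?thesis using \<open>c0 \<theta> * (\<Sum>z\<in>C. w z) \<ge> 0\<close> by (simp add: zero_le_mult_iff)
  qed
  have u0: "u \<theta> 0 = 1" unfolding u_def by simp
  have u1: "u \<theta> 1 = \<theta> / real k" unfolding u_def by simp
  have wz: "w z = 1 + (real (card C) - 1) * (\<theta> / real k)" if z: "z \<in> C" for z
  proof -
    have "w z = u \<theta> (d z z) + (\<Sum>z'\<in>C - {z}. u \<theta> (d z' z))"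
      unfolding w_def using sum.remove[OF Cf z, of "\<lambda>z'. u \<theta> (d z' z)"] by simp
    also have "(\<Sum>z'\<in>C - {z}. u \<theta> (d z' z)) = (\<Sum>z'\<in>C - {z}. u \<theta> 1)"
    proof (intro sum.cong refl)
      fix z' assume "z' \<in> C - {z}"
      then have "E z' z" using C z unfolding clique_def by auto
      then show "u \<theta> (d z' z) = u \<theta> 1" using d_edge by simp
    qed
    also have "\<dots> = real (card (C - {z})) * u \<theta> 1" by simp
    also have "real (card (C - {z})) = real (card C) - 1"
    proof -
      have "card C \<ge> 1" using z Cf by (metis One_nat_def Suc_leI card_gt_0_iff empty_iff)
      then show ?thesis using card_Diff_singleton[OF z] by (simp add: of_nat_diff)
    qed
    finally show ?thesis using u0 u1 by simp
  qed
  have "(\<Sum>z\<in>C. w z) = (\<Sum>z\<in>C. 1 + (real (card C) - 1) * (\<theta> / real k))"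
    by (rule sum.cong) (use wz in auto)
  also have "\<dots> = real (card C) * (1 + (real (card C) - 1) * (\<theta> / real k))" by simp
  finally have sw: "(\<Sum>z\<in>C. w z) = real (card C) * (1 + (real (card C) - 1) * (\<theta> / real k))" .
  have cpos: "real (card C) > 0" using False Cf by (simp add: card_gt_0_iff)
  have h1: "1 + (real (card C) - 1) * (\<theta> / real k) \<ge> 0"
  proof (rule ccontr)
    assume "\<not> ?thesis"
    then have "real (card C) * (1 + (real (card C) - 1) * (\<theta> / real k)) < 0"
      using cpos by (simp add: mult_pos_neg)
    then show False using ws sw by simp
  qed
  define \<alpha> where "\<alpha> = real (card C) - 1"
  have kp: "real k > 0" using k_pos by simp
  have "(\<alpha> * (\<theta> / real k)) * real k \<ge> (-1) * real k"
    using h1 kp unfolding \<alpha>_def by (intro mult_right_mono) auto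
  then have "\<alpha> * \<theta> \<ge> - real k" using kp by simp
  then have "\<alpha> * (- \<theta>) \<le> real k" by simp
  moreover have "- \<theta> > 0" using neg by simp
  ultimately have "\<alpha> \<le> real k / (- \<theta>)" by (subst pos_le_divide_eq) auto
  then show ?thesis unfolding \<alpha>_def by simp
qed

end


context drg begin

lemma eig_adj: "adj_eigenvalue V E \<theta> \<longleftrightarrow> (\<exists>g. (\<exists>x\<in>V. g x \<noteq> 0) \<and> eig g \<theta>)"
  unfolding adj_eigenvalue_def eig_def N_def by auto

lemma eigset_fin: "finite {\<theta>. adj_eigenvalue V E \<theta>}" using eig_finite[OF fin] .

lemma k_eig: "adj_eigenvalue V E (real k)"
  unfolding eig_adj using eig_const Vne by (intro exI[of _ "\<lambda>_. 1"]) auto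

lemma tmin_in: "adj_eigenvalue V E (theta_min V E)"
proof -
  have "theta_min V E \<in> {\<theta>. adj_eigenvalue V E \<theta>}"
    unfolding theta_min_def using eigset_fin k_eig by (intro Min_in) auto
  then show ?thesis by simp
qed

lemma tmin_le: "adj_eigenvalue V E \<theta> \<Longrightarrow> theta_min V E \<le> \<theta>"
  unfolding theta_min_def using eigset_fin by (intro Min_le) auto

lemma delsarte_min:
  assumes "theta_min V E < 0" "clique V E C"
  shows "real (card C) \<le> 1 + real k / (- theta_min V E)"
proof -
  obtain g x0 where "x0 \<in> V" "g x0 \<noteq> 0" "eig g (theta_min V E)" using tmin_in unfolding eig_adj by blast
  then show ?thesis using delsarte assms by blast
qed

end

locale spls = drg +
  fixes c s :: nat
  assumes sp: "SPLS V E c s"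
begin

abbreviation L where "L \<equiv> spls_lines V E c s"
definition Lx where "Lx x = {l\<in>L. x \<in> l}"

lemma c_ge1: "c \<ge> 1" using sp unfolding SPLS_def by simp
lemma s_ge2: "s \<ge> 2" using sp unfolding SPLS_def by simp
lemma pl: "x \<in> V \<Longrightarrow> y \<in> V \<Longrightarrow> x \<noteq> y \<Longrightarrow> card {l \<in> L. x \<in> l \<and> y \<in> l} \<le> 1"
  using sp unfolding SPLS_def Let_def by blast
lemma pg: "x \<in> V \<Longrightarrow> y \<in> V \<Longrightarrow> x \<noteq> y \<Longrightarrow> E x y \<longleftrightarrow> (\<exists>l\<in>L. x \<in> l \<and> y \<in> l)"
  using sp unfolding SPLS_def Let_def by blast
lemma a1b: "int_a V E 1 \<ge> (2 * int s - 1) * (int c - 1)"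
  using sp unfolding SPLS_def Let_def by blast
lemma rdeg: "x \<in> V \<Longrightarrow> card (Lx x) \<le> s"
  using sp unfolding SPLS_def Let_def Lx_def by blast
lemma tau: "x \<in> V \<Longrightarrow> l \<in> L \<Longrightarrow> x \<notin> l \<Longrightarrow> card {y \<in> l. E x y} \<le> c"
  using sp unfolding SPLS_def Let_def by blast

lemma line_clique: "l \<in> L \<Longrightarrow> clique V E l"
  unfolding spls_lines_def maximal_clique_def by auto
lemma lineV: "l \<in> L \<Longrightarrow> l \<subseteq> V" using line_clique unfolding clique_def by auto
lemma line_fin: "l \<in> L \<Longrightarrow> finite l" using lineV fin finite_subset by blast
lemma line_adj: "l \<in> L \<Longrightarrow> x \<in> l \<Longrightarrow> y \<in> l \<Longrightarrow> x \<noteq> y \<Longrightarrow> E x y"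
  using line_clique unfolding clique_def by auto
lemma line_size: "l \<in> L \<Longrightarrow> int (card l) \<ge> int_a V E 1 + 2 - (int c - 1) * (int s - 1)"
  unfolding spls_lines_def by auto
lemma L_fin: "finite L"
proof -
  have "L \<subseteq> Pow V" using lineV by auto
  then show ?thesis using fin finite_subset by blast
qed
lemma Lx_fin: "finite (Lx x)" unfolding Lx_def using L_fin by simp

lemma line_size2: "l \<in> L \<Longrightarrow> card l \<ge> 2"
proof -
  assume l: "l \<in> L"
  have "(2 * int s - 1) * (int c - 1) - (int c - 1) * (int s - 1) = int s * (int c - 1)"
    by (simp add: algebra_simps)
  moreover have "int s * (int c - 1) \<ge> 0" using c_ge1 by simp
  ultimately show ?thesis using line_size[OF l] a1b by linarith
qed

lemma uniq: "l1 \<in> L \<Longrightarrow> l2 \<in> L \<Longrightarrow> x \<in> l1 \<Longrightarrow> y \<in> l1 \<Longrightarrow> x \<in> l2 \<Longrightarrow> y \<in> l2 \<Longrightarrow> x \<noteq> y \<Longrightarrow> l1 = l2"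
proof -
  assume a: "l1 \<in> L" "l2 \<in> L" "x \<in> l1" "y \<in> l1" "x \<in> l2" "y \<in> l2" "x \<noteq> y"
  have "x \<in> V" "y \<in> V" using a lineV by auto
  then have "card {l \<in> L. x \<in> l \<and> y \<in> l} \<le> Suc 0" using pl a by simp
  moreover have "finite {l \<in> L. x \<in> l \<and> y \<in> l}" using L_fin by simp
  ultimately show ?thesis using card_le_Suc0_iff_eq a by blast
qed

lemma nbr_union: "x \<in> V \<Longrightarrow> N x = (\<Union>l\<in>Lx x. l - {x})"
proof
  assume x: "x \<in> V"
  show "N x \<subseteq> (\<Union>l\<in>Lx x. l - {x})"
  proof
    fix y assume "y \<in> N x"
    then have y: "y \<in> V" "E x y" unfolding N_def by auto
    then have "x \<noteq> y" using irr by auto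
    then obtain l where "l \<in> L" "x \<in> l" "y \<in> l" using pg x y by blast
    then show "y \<in> (\<Union>l\<in>Lx x. l - {x})" unfolding Lx_def using \<open>x \<noteq> y\<close> by auto
  qed
  show "(\<Union>l\<in>Lx x. l - {x}) \<subseteq> N x"
    unfolding Lx_def N_def using line_adj lineV by blast
qed

lemma Lx_disj: "l1 \<in> Lx x \<Longrightarrow> l2 \<in> Lx x \<Longrightarrow> l1 \<noteq> l2 \<Longrightarrow> (l1 - {x}) \<inter> (l2 - {x}) = {}"
  unfolding Lx_def using uniq by blast

lemma sum_N: "x \<in> V \<Longrightarrow> (\<Sum>y\<in>N x. f y) = (\<Sum>l\<in>Lx x. \<Sum>y\<in>l - {x}. f y)"
  unfolding nbr_union
  by (rule sum.UNION_disjoint) (use Lx_fin line_fin Lx_disj in \<open>auto simp: Lx_def\<close>)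

lemma card_N: "x \<in> V \<Longrightarrow> card (N x) = (\<Sum>l\<in>Lx x. card (l - {x}))"
  unfolding nbr_union
  by (rule card_UN_disjoint) (use Lx_fin line_fin Lx_disj in \<open>auto simp: Lx_def\<close>)

lemma eig_lower:
  assumes g: "eig g \<theta>" and x0: "x0 \<in> V" "g x0 \<noteq> 0"
  shows "\<theta> \<ge> - real s"
proof -
  define T where "T l = (\<Sum>y\<in>l. g y)" for l
  have sq: "(\<Sum>x\<in>V. \<Sum>l\<in>Lx x. g x * T l) = (\<Sum>l\<in>L. T l * T l)"
  proof -
    have "(\<Sum>x\<in>V. \<Sum>l\<in>Lx x. g x * T l) = (\<Sum>x\<in>V. \<Sum>l\<in>L. if x \<in> l then g x * T l else 0)"
      unfolding Lx_def using L_fin by (simp add: sum.inter_filter)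
    also have "\<dots> = (\<Sum>l\<in>L. \<Sum>x\<in>V. if x \<in> l then g x * T l else 0)" by (rule sum.swap)
    also have "\<dots> = (\<Sum>l\<in>L. \<Sum>x\<in>l. g x * T l)"
    proof (rule sum.cong[OF refl])
      fix l assume l: "l \<in> L"
      have "{x\<in>V. x \<in> l} = l" using lineV l by auto
      then show "(\<Sum>x\<in>V. if x \<in> l then g x * T l else 0) = (\<Sum>x\<in>l. g x * T l)"
        using fin sum.inter_filter[OF fin, of "\<lambda>x. g x * T l" "\<lambda>x. x \<in> l"] by simp
    qed
    also have "\<dots> = (\<Sum>l\<in>L. T l * T l)" unfolding T_def by (simp add: sum_distrib_right)
    finally show ?thesis .
  qed
  have "\<theta> * (\<Sum>x\<in>V. g x * g x) = (\<Sum>x\<in>V. g x * (\<Sum>y\<in>N x. g y))"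
    using g unfolding eig_def by (simp add: sum_distrib_left algebra_simps)
  also have "\<dots> = (\<Sum>x\<in>V. \<Sum>l\<in>Lx x. g x * T l - g x * g x)"
  proof (intro sum.cong refl)
    fix x assume x: "x \<in> V"
    have "(\<Sum>y\<in>N x. g y) = (\<Sum>l\<in>Lx x. T l - g x)"
      unfolding sum_N[OF x] T_def
    proof (intro sum.cong refl)
      fix l assume "l \<in> Lx x"
      then have "x \<in> l" "finite l" unfolding Lx_def using line_fin by auto
      then show "(\<Sum>y\<in>l - {x}. g y) = (\<Sum>y\<in>l. g y) - g x" by (simp add: sum_diff1)
    qed
    then show "g x * (\<Sum>y\<in>N x. g y) = (\<Sum>l\<in>Lx x. g x * T l - g x * g x)"
      by (simp add: sum_distrib_left algebra_simps)
  qed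
  also have "\<dots> = (\<Sum>x\<in>V. \<Sum>l\<in>Lx x. g x * T l) - (\<Sum>x\<in>V. real (card (Lx x)) * (g x * g x))"
    by (simp add: sum_subtractf)
  also note sq
  finally have eq: "\<theta> * (\<Sum>x\<in>V. g x * g x) = (\<Sum>l\<in>L. T l * T l) - (\<Sum>x\<in>V. real (card (Lx x)) * (g x * g x))" .
  have q1: "(\<Sum>l\<in>L. T l * T l) \<ge> 0" by (intro sum_nonneg) simp
  moreover have q2: "(\<Sum>x\<in>V. real (card (Lx x)) * (g x * g x)) \<le> (\<Sum>x\<in>V. real s * (g x * g x))"
    using rdeg by (intro sum_mono mult_right_mono) auto
  ultimately have "\<theta> * (\<Sum>x\<in>V. g x * g x) \<ge> - real s * (\<Sum>x\<in>V. g x * g x)"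
  proof -
    have "- real s * (\<Sum>x\<in>V. g x * g x) = - (\<Sum>x\<in>V. real s * (g x * g x))" by (simp add: sum_distrib_left sum_negf)
    then show ?thesis unfolding eq using q1 q2 by linarith
  qed
  moreover have "(\<Sum>x\<in>V. g x * g x) > 0"
  proof -
    have "g x0 * g x0 \<le> (\<Sum>x\<in>V. g x * g x)" using x0 fin by (intro member_le_sum) auto
    moreover have "g x0 * g x0 > 0" using x0(2) by (simp add: zero_less_mult_iff linorder_neq_iff, blast)
    ultimately show ?thesis by simp
  qed
  ultimately show ?thesis
    by (metis minus_mult_left mult_le_cancel_right_pos)
qed

lemma part1: "- theta_min V E \<le> real s"
proof -
  obtain g x0 where "x0 \<in> V" "g x0 \<noteq> 0" "eig g (theta_min V E)" using tmin_in unfolding eig_adj by blast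
  then show ?thesis using eig_lower by fastforce
qed

lemma line_ne: "l \<in> L \<Longrightarrow> l \<noteq> {}" using line_size2 by fastforce

lemma part2:
  assumes eq: "- theta_min V E = real s"
  shows "geometric V E"
proof -
  have neg: "theta_min V E < 0" using eq s_ge2 by simp
  have bound: "real (card l) - 1 \<le> real k / real s" if "l \<in> L" for l
    using delsarte_min[OF neg line_clique[OF that]] eq by simp
  have sz: "real (card l) = 1 + real k / real s" if l: "l \<in> L" for l
  proof -
    obtain x where x: "x \<in> l" using line_ne[OF l] by auto
    then have xV: "x \<in> V" using lineV l by auto
    have lx: "l \<in> Lx x" unfolding Lx_def using l x by simp
    have kx: "real k = (\<Sum>l\<in>Lx x. real (card l) - 1)"
    proof -
      have "real k = real (card (N x))" using deg xV by simp
      also have "\<dots> = (\<Sum>l\<in>Lx x. real (card (l - {x})))" using card_N[OF xV] by simp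
      also have "\<dots> = (\<Sum>l\<in>Lx x. real (card l) - 1)"
      proof (intro sum.cong refl)
        fix l' assume "l' \<in> Lx x"
        then have "x \<in> l'" "finite l'" unfolding Lx_def using line_fin by auto
        then show "real (card (l' - {x})) = real (card l') - 1"
        proof -
          have "card l' \<ge> 1" using \<open>x \<in> l'\<close> \<open>finite l'\<close> by (metis One_nat_def Suc_leI card_gt_0_iff empty_iff)
          then show ?thesis using card_Diff_singleton[OF \<open>x \<in> l'\<close>] by (simp add: of_nat_diff)
        qed
      qed
      finally show ?thesis .
    qed
    have nn: "\<And>l'. l' \<in> Lx x \<Longrightarrow> 0 \<le> real k / real s - (real (card l') - 1)"
      using bound unfolding Lx_def by auto
    have "(\<Sum>l'\<in>Lx x. real k / real s - (real (card l') - 1)) = real (card (Lx x)) * (real k / real s) - real k"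
      unfolding kx by (simp add: sum_subtractf)
    also have "\<dots> \<le> real s * (real k / real s) - real k"
      using rdeg[OF xV] by (intro diff_right_mono mult_right_mono) auto
    also have "\<dots> = 0" using s_ge2 by simp
    finally have "(\<Sum>l'\<in>Lx x. real k / real s - (real (card l') - 1)) \<le> 0" .
    moreover have "(\<Sum>l'\<in>Lx x. real k / real s - (real (card l') - 1)) \<ge> 0" using nn by (intro sum_nonneg) auto
    ultimately have "(\<Sum>l'\<in>Lx x. real k / real s - (real (card l') - 1)) = 0" by simp
    then have "\<forall>l'\<in>Lx x. real k / real s - (real (card l') - 1) = 0"
      using sum_nonneg_eq_0_iff[OF Lx_fin nn] by simp
    then show ?thesis using lx by simp
  qed
  show ?thesis unfolding geometric_def
  proof (intro exI[of _ L] conjI allI impI)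
    show "\<forall>C\<in>L. delsarte_clique V E C"
      unfolding delsarte_clique_def using sz line_clique eq valency_def by simp
  next
    fix x y assume e: "E x y"
    then have xy: "x \<in> V" "y \<in> V" "x \<noteq> y" using inV irr by auto
    then obtain l where "l \<in> L" "x \<in> l" "y \<in> l" using pg e by blast
    then show "\<exists>!C. C \<in> L \<and> x \<in> C \<and> y \<in> C" using uniq xy by blast
  qed
qed

end


lemma two_choose: "2 * int (n choose 2) = int n * (int n - 1)"
proof -
  have "even (n * (n - 1))" by (cases n) auto
  then have "2 * (n choose 2) = n * (n - 1)" unfolding choose_two by simp
  then have "int (2 * (n choose 2)) = int (n * (n - 1))" by simp
  then show ?thesis by (cases n) (simp_all add: algebra_simps)
qed

lemma swap_off: "finite A \<Longrightarrow> (\<Sum>a\<in>A. \<Sum>b\<in>A - {a}. f b a) = (\<Sum>a\<in>A. \<Sum>b\<in>A - {a}. (f a b :: int))"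
proof -
  assume A: "finite A"
  have e: "\<And>a g. (\<Sum>b\<in>A - {a}. g b) = (\<Sum>b\<in>A. if b \<noteq> a then g b else (0::int))"
  proof -
    fix a and g :: "_ \<Rightarrow> int"
    have "A - {a} = {b\<in>A. b \<noteq> a}" by auto
    then show "(\<Sum>b\<in>A - {a}. g b) = (\<Sum>b\<in>A. if b \<noteq> a then g b else 0)"
      using sum.inter_filter[OF A, of g "\<lambda>b. b \<noteq> a"] by simp
  qed
  have "(\<Sum>a\<in>A. \<Sum>b\<in>A - {a}. f b a) = (\<Sum>a\<in>A. \<Sum>b\<in>A. if b \<noteq> a then f b a else 0)"
    using e by simp
  also have "\<dots> = (\<Sum>b\<in>A. \<Sum>a\<in>A. if b \<noteq> a then f b a else 0)" by (rule sum.swap)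
  also have "\<dots> = (\<Sum>b\<in>A. \<Sum>a\<in>A. if a \<noteq> b then f b a else 0)" by (intro sum.cong refl) auto
  also have "\<dots> = (\<Sum>a\<in>A. \<Sum>b\<in>A - {a}. f a b)" using e by simp
  finally show ?thesis .
qed

context drg begin

lemma a1_eq: "E x y \<Longrightarrow> int (card (N x \<inter> N y)) = int_a V E 1"
proof -
  assume e: "E x y"
  have xy: "x \<in> V" "y \<in> V" using inV e by auto
  have d1: "d x y = 1" using d_edge e by simp
  have "a_set x y = N x \<inter> N y"
  proof (intro equalityI subsetI)
    fix z assume z: "z \<in> a_set x y"
    then have "z \<in> V" "E y z" "d x z = 1" unfolding a_set_def using d1 by auto
    then have "E x z" using d_one xy by blast
    then show "z \<in> N x \<inter> N y" using \<open>z \<in> V\<close> \<open>E y z\<close> unfolding N_def by auto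
  next
    fix z assume z: "z \<in> N x \<inter> N y"
    then have "z \<in> V" "E y z" "E x z" unfolding N_def by auto
    then have "d x z = 1" using d_edge by blast
    then show "z \<in> a_set x y" using \<open>z \<in> V\<close> \<open>E y z\<close> d1 unfolding a_set_def by auto
  qed
  moreover have "card (a_set x y) + int_b V E 1 + int_c V E 1 = k" using a_card[OF xy] d1 by simp
  ultimately show ?thesis unfolding int_a_def using c1 by simp
qed

lemma c2_eq: "y \<in> V \<Longrightarrow> z \<in> V \<Longrightarrow> d y z = 2 \<Longrightarrow> card (N y \<inter> N z) = int_c V E 2"
proof -
  assume a: "y \<in> V" "z \<in> V" "d y z = 2"
  have "c_set V E y z = N y \<inter> N z" unfolding c_set_def N_def using a d_one_iff by auto
  then show ?thesis using c_eq[OF a(1,2)] a by simp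
qed

lemma b1_pos: "int_b V E 1 \<ge> 1"
proof -
  obtain x w where xw: "x \<in> V" "w \<in> V" "d x w = 2" using pair_ex D_ge2 by blast
  then obtain y where y: "y \<in> V" "E w y" "d x y = 1" using d_pred[of x w 1] by auto
  then have "w \<in> b_set V E x y" unfolding b_set_def using xw sym by auto
  moreover have "finite (b_set V E x y)" unfolding b_set_def using fin by simp
  ultimately have "card (b_set V E x y) \<ge> 1" by (metis One_nat_def Suc_leI card_gt_0_iff empty_iff)
  then show ?thesis using b_eq[OF xw(1) y(1)] y by simp
qed

end

context spls begin

lemma LB:
  assumes x: "x \<in> V" and l: "l \<in> Lx x" and y: "y \<in> l" "y \<noteq> x"
  shows "int_a V E 1 \<le> int (card l) - 2 + (\<Sum>l'\<in>Lx x - {l}. int (card (N y \<inter> (l' - {x}))))"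
proof -
  have lL: "l \<in> L" "x \<in> l" using l unfolding Lx_def by auto
  have e: "E x y" using line_adj[OF lL(1) lL(2) y(1)] y by auto
  have sub: "N x \<inter> N y \<subseteq> (l - {x, y}) \<union> (\<Union>l'\<in>Lx x - {l}. N y \<inter> (l' - {x}))"
  proof
    fix z assume z: "z \<in> N x \<inter> N y"
    then obtain l'' where l'': "l'' \<in> Lx x" "z \<in> l'' - {x}" using nbr_union[OF x] by auto
    have "z \<noteq> y" using z irr unfolding N_def by auto
    show "z \<in> (l - {x, y}) \<union> (\<Union>l'\<in>Lx x - {l}. N y \<inter> (l' - {x}))"
    proof (cases "l'' = l")
      case True then show ?thesis using l'' \<open>z \<noteq> y\<close> by auto
    next
      case False then show ?thesis using l'' z by auto
    qed
  qed
  have f1: "finite (l - {x, y})" using line_fin lL by simp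
  have f2: "finite (\<Union>l'\<in>Lx x - {l}. N y \<inter> (l' - {x}))" using Lx_fin N_fin by simp
  have "card (N x \<inter> N y) \<le> card ((l - {x, y}) \<union> (\<Union>l'\<in>Lx x - {l}. N y \<inter> (l' - {x})))"
    using sub f1 f2 by (intro card_mono) auto
  also have "\<dots> \<le> card (l - {x, y}) + card (\<Union>l'\<in>Lx x - {l}. N y \<inter> (l' - {x}))" by (rule card_Un_le)
  also have "card (\<Union>l'\<in>Lx x - {l}. N y \<inter> (l' - {x})) \<le> (\<Sum>l'\<in>Lx x - {l}. card (N y \<inter> (l' - {x})))"
    using Lx_fin by (intro card_UN_le) simp
  finally have "int (card (N x \<inter> N y)) \<le> int (card (l - {x, y})) + (\<Sum>l'\<in>Lx x - {l}. int (card (N y \<inter> (l' - {x}))))"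
    by (simp add: of_nat_sum[symmetric] del: of_nat_sum)
  moreover have "card (l - {x, y}) = card l - 2"
    using card_Diff_subset[of "{x,y}" l] lL y line_fin by simp
  moreover have "card l \<ge> 2" using line_size2 lL by simp
  ultimately show ?thesis using a1_eq[OF e] by simp
qed

lemma tau':
  assumes x: "x \<in> V" and l: "l \<in> Lx x" and l': "l' \<in> Lx x" and ne: "l \<noteq> l'" and y: "y \<in> l" "y \<noteq> x"
  shows "int (card (N y \<inter> (l' - {x}))) \<le> int c - 1"
proof -
  have lL: "l \<in> L" "x \<in> l" "l' \<in> L" "x \<in> l'" using l l' unfolding Lx_def by auto
  have yl': "y \<notin> l'" using uniq[OF lL(1) lL(3) lL(2) y(1) lL(4)] ne y by auto
  have yV: "y \<in> V" using lineV lL y by auto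
  have t: "card {z \<in> l'. E y z} \<le> c" using tau[OF yV lL(3) yl'] .
  have ex: "E y x" using line_adj[OF lL(1) y(1) lL(2)] y by simp
  have eqs: "N y \<inter> (l' - {x}) = {z \<in> l'. E y z} - {x}" unfolding N_def using lineV lL by auto
  have "card ({z \<in> l'. E y z} - {x}) = card {z \<in> l'. E y z} - 1"
    using ex lL by (intro card_Diff_singleton) auto
  moreover have "card {z \<in> l'. E y z} \<ge> 1"
  proof -
    have "x \<in> {z \<in> l'. E y z}" using ex lL by simp
    moreover have "finite {z \<in> l'. E y z}" using line_fin lL by simp
    ultimately show ?thesis by (metis One_nat_def Suc_leI card_gt_0_iff empty_iff)
  qed
  ultimately show ?thesis using eqs t by simp
qed

lemma r_ge2: assumes x: "x \<in> V" shows "card (Lx x) \<ge> 2"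
proof (rule ccontr)
  assume "\<not> ?thesis"
  then have le1: "card (Lx x) \<le> 1" by simp
  have "card (N x) \<ge> 1" using deg x k_pos by simp
  then have "N x \<noteq> {}" by auto
  then obtain y where y: "y \<in> N x" by auto
  then obtain l where l: "l \<in> Lx x" "y \<in> l - {x}" using nbr_union[OF x] by auto
  have "\<forall>a\<in>Lx x. \<forall>b\<in>Lx x. a = b" using le1 Lx_fin card_le_Suc0_iff_eq[of "Lx x"] by simp
  then have Lxl: "Lx x = {l}" using l by blast
  have lL: "l \<in> L" "x \<in> l" using l unfolding Lx_def by auto
  have kk: "k = card (l - {x})" using card_N[OF x] deg[OF x] Lxl by simp
  have e: "E x y" using y unfolding N_def by simp
  have "l - {x, y} \<subseteq> N x \<inter> N y"
    unfolding N_def using lineV lL line_adj l by auto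
  then have "card (l - {x, y}) \<le> card (N x \<inter> N y)" using N_fin by (intro card_mono) auto
  moreover have "card (l - {x, y}) + 1 = card (l - {x})"
  proof -
    have "l - {x} = insert y (l - {x, y})" using l by auto
    then show ?thesis using line_fin lL by simp
  qed
  ultimately have "int k - 1 \<le> int_a V E 1" using a1_eq[OF e] kk by simp
  then show False using b1_pos c1 unfolding int_a_def by simp
qed

lemma min_spls:
  assumes s3: "s \<ge> 3" and r: "\<forall>x\<in>V. card (Lx x) \<le> s - 1"
  shows "SPLS V E c (s - 1)"
proof -
  have c1': "int c - 1 \<ge> 0" using c_ge1 by simp
  have eqL: "spls_lines V E c (s - 1) = L"
  proof
    show "spls_lines V E c (s - 1) \<subseteq> L"
    proof
      fix l assume l: "l \<in> spls_lines V E c (s - 1)"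
      have "(int c - 1) * (int (s - 1) - 1) \<le> (int c - 1) * (int s - 1)"
        using c1' s3 by (intro mult_left_mono) auto
      then show "l \<in> L" using l unfolding spls_lines_def by auto
    qed
  next
    show "L \<subseteq> spls_lines V E c (s - 1)"
    proof
      fix l assume l: "l \<in> L"
      obtain x where x: "x \<in> l" using line_ne[OF l] by auto
      have "card (l - {x}) \<ge> 1" using line_size2[OF l] x line_fin[OF l] by simp
      then have "l - {x} \<noteq> {}" by (intro notI) simp
      then obtain y where y: "y \<in> l" "y \<noteq> x" by auto
      have xV: "x \<in> V" using lineV l x by auto
      have lx: "l \<in> Lx x" unfolding Lx_def using l x by simp
      have "(\<Sum>l'\<in>Lx x - {l}. int (card (N y \<inter> (l' - {x})))) \<le> (\<Sum>l'\<in>Lx x - {l}. int c - 1)"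
        using tau'[OF xV lx _ _ y] by (intro sum_mono) auto
      also have "\<dots> = int (card (Lx x - {l})) * (int c - 1)" by simp
      also have "\<dots> \<le> (int s - 2) * (int c - 1)"
      proof -
        have "card (Lx x - {l}) + 1 = card (Lx x)"
        proof -
          have "card (Lx x) > 0" using lx Lx_fin card_gt_0_iff by blast
          then show ?thesis using card_Diff_singleton[OF lx] by simp
        qed
        moreover have "card (Lx x) \<le> s - 1" using r xV by simp
        ultimately have "card (Lx x - {l}) + 2 \<le> s" using s3 by simp
        then have "int (card (Lx x - {l})) \<le> int s - 2" by simp
        then show ?thesis using c1' by (intro mult_right_mono) auto
      qed
      finally have "int_a V E 1 \<le> int (card l) - 2 + (int s - 2) * (int c - 1)"
        using LB[OF xV lx y] by linarith
      moreover have "int (s - 1) - 1 = int s - 2" using s3 by simp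
      ultimately have "int (card l) \<ge> int_a V E 1 + 2 - (int c - 1) * (int (s - 1) - 1)"
        by (simp add: algebra_simps)
      then show "l \<in> spls_lines V E c (s - 1)" using l unfolding spls_lines_def by auto
    qed
  qed
  have a1': "int_a V E 1 \<ge> (2 * int (s - 1) - 1) * (int c - 1)"
  proof -
    have "(2 * int (s - 1) - 1) * (int c - 1) \<le> (2 * int s - 1) * (int c - 1)"
      using c1' s3 by (intro mult_right_mono) auto
    then show ?thesis using a1b by linarith
  qed
  show ?thesis unfolding SPLS_def Let_def eqL
    using c_ge1 s3 pl pg a1' r tau unfolding Lx_def by auto
qed

lemma reps:
  assumes x: "x \<in> V" and rs: "card (Lx x) = s"
  shows "F \<subseteq> Lx x \<Longrightarrow> \<exists>y. (\<forall>l\<in>F. y l \<in> l \<and> y l \<noteq> x) \<and> (\<forall>l\<in>F. \<forall>l'\<in>F. l \<noteq> l' \<longrightarrow> \<not> E (y l) (y l'))"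
proof -
  assume FL: "F \<subseteq> Lx x"
  have "finite F" using FL Lx_fin finite_subset by blast
  then show ?thesis using FL
  proof (induction F rule: finite_subset_induct')
    case empty then show ?case by simp
  next
    case (insert l F)
    obtain y where y: "\<forall>l\<in>F. y l \<in> l \<and> y l \<noteq> x" "\<forall>l\<in>F. \<forall>l'\<in>F. l \<noteq> l' \<longrightarrow> \<not> E (y l) (y l')"
      using insert.IH by blast
    have lL: "l \<in> L" "x \<in> l" using insert.hyps unfolding Lx_def by auto
    have cF: "card F \<le> s - 1"
    proof -
      have "card (insert l F) \<le> card (Lx x)" using insert.hyps Lx_fin by (intro card_mono) auto
      then show ?thesis using insert.hyps rs by simp
    qed
    define Bad where "Bad = (\<Union>l'\<in>F. N (y l') \<inter> (l - {x}))"
    have "card Bad \<le> (\<Sum>l'\<in>F. card (N (y l') \<inter> (l - {x})))" unfolding Bad_def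
      using insert.hyps by (intro card_UN_le) simp
    then have "int (card Bad) \<le> (\<Sum>l'\<in>F. int (card (N (y l') \<inter> (l - {x}))))"
      by (simp add: of_nat_sum[symmetric] del: of_nat_sum)
    also have "\<dots> \<le> (\<Sum>l'\<in>F. int c - 1)"
    proof (intro sum_mono)
      fix l' assume l': "l' \<in> F"
      then have "l' \<noteq> l" using insert.hyps by auto
      then show "int (card (N (y l') \<inter> (l - {x}))) \<le> int c - 1"
        using tau'[OF x _ insert.hyps(2)] l' insert.hyps(3) y(1) by auto
    qed
    also have "\<dots> = int (card F) * (int c - 1)" by simp
    also have "\<dots> \<le> (int s - 1) * (int c - 1)"
      using cF c_ge1 s_ge2 by (intro mult_right_mono) auto
    finally have bB: "int (card Bad) \<le> (int s - 1) * (int c - 1)" .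
    have "int (card l) \<ge> int_a V E 1 + 2 - (int c - 1) * (int s - 1)" using line_size lL by simp
    moreover have "int (card (l - {x})) = int (card l) - 1"
    proof -
      have "card l \<ge> 2" using line_size2 lL by simp
      then show ?thesis using lL line_fin by (simp add: of_nat_diff)
    qed
    ultimately have "int (card (l - {x})) \<ge> int s * (int c - 1) + 1"
      using a1b by (simp add: algebra_simps)
    then have "int (card (l - {x})) > int (card Bad)" using bB c_ge1 by (simp add: algebra_simps)
    then have "card (l - {x}) > card Bad" by simp
    moreover have "finite Bad" unfolding Bad_def using insert.hyps(1) N_fin by simp
    ultimately have "\<not> (l - {x} \<subseteq> Bad)" using card_mono[of Bad "l - {x}"] by auto
    then obtain z where z: "z \<in> l" "z \<noteq> x" "z \<notin> Bad" by auto
    define y' where "y' = y(l := z)"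
    have A: "\<forall>l1\<in>insert l F. y' l1 \<in> l1 \<and> y' l1 \<noteq> x" unfolding y'_def using y z by auto
    have B: "\<forall>l1\<in>insert l F. \<forall>l2\<in>insert l F. l1 \<noteq> l2 \<longrightarrow> \<not> E (y' l1) (y' l2)"
    proof (intro ballI impI)
      fix l1 l2 assume l12: "l1 \<in> insert l F" "l2 \<in> insert l F" "l1 \<noteq> l2"
      have nb: "\<And>l'. l' \<in> F \<Longrightarrow> \<not> E (y l') z" using z unfolding Bad_def N_def using lineV lL by auto
      show "\<not> E (y' l1) (y' l2)"
      proof (cases "l1 = l")
        case True
        then have "l2 \<in> F" using l12 by auto
        then have "l2 \<noteq> l" using insert.hyps by auto
        then show ?thesis using True nb[OF \<open>l2 \<in> F\<close>] sym unfolding y'_def by auto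
      next
        case False
        then have l1F: "l1 \<in> F" using l12 by auto
        then have "l1 \<noteq> l" using insert.hyps by auto
        show ?thesis
        proof (cases "l2 = l")
          case True then show ?thesis using nb[OF l1F] \<open>l1 \<noteq> l\<close> unfolding y'_def by auto
        next
          case False
          then have "l2 \<in> F" using l12 by auto
          then show ?thesis using y(2) l1F l12 False \<open>l1 \<noteq> l\<close> unfolding y'_def by auto
        qed
      qed
    qed
    show ?case using A B by blast
  qed
qed

lemma pairb:
  assumes cc: "c = int_c V E 2" and x: "x \<in> V" and l: "l \<in> Lx x" and l': "l' \<in> Lx x" and ne: "l \<noteq> l'"
    and y1: "y1 \<in> l" "y1 \<noteq> x" and y2: "y2 \<in> l'" "y2 \<noteq> x" and ne2: "\<not> E y1 y2"
  shows "int (card (N y1 \<inter> (l' - {x}))) + int (card (N y2 \<inter> (l - {x}))) \<le> int c - 1"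
proof -
  have lL: "l \<in> L" "x \<in> l" "l' \<in> L" "x \<in> l'" using l l' unfolding Lx_def by auto
  have yV: "y1 \<in> V" "y2 \<in> V" using lineV lL y1 y2 by auto
  have neq: "y1 \<noteq> y2" using uniq[OF lL(1) lL(3) lL(2) y1(1) lL(4)] ne y1 y2 by auto
  have e1: "E y1 x" using line_adj[OF lL(1) y1(1) lL(2)] y1 by simp
  have e2: "E y2 x" using line_adj[OF lL(3) y2(1) lL(4)] y2 by simp
  have "d y1 y2 \<le> d y1 x + d x y2" using d_tri yV x by simp
  moreover have "d y1 x = 1" "d x y2 = 1" using d_edge e1 e2 sym by auto
  moreover have "d y1 y2 \<noteq> 0" using d_zero yV neq by simp
  moreover have "d y1 y2 \<noteq> 1" using d_one yV ne2 by auto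
  ultimately have d2: "d y1 y2 = 2" by simp
  have cN: "card (N y1 \<inter> N y2) = c" using c2_eq[OF yV d2] cc by simp
  define A where "A = N y1 \<inter> (l' - {x})"
  define B where "B = N y2 \<inter> (l - {x})"
  have sub: "insert x (A \<union> B) \<subseteq> N y1 \<inter> N y2"
  proof
    fix z assume z: "z \<in> insert x (A \<union> B)"
    show "z \<in> N y1 \<inter> N y2"
    proof (cases "z = x")
      case True then show ?thesis using e1 e2 x sym unfolding N_def by auto
    next
      case False
      then have "z \<in> A \<or> z \<in> B" using z by auto
      then show ?thesis
      proof
        assume zA: "z \<in> A"
        then have "E y1 z" "z \<in> l'" "z \<in> V" unfolding A_def N_def by auto
        then have "z \<noteq> y2" using ne2 by auto
        then have "E y2 z" using line_adj[OF lL(3) y2(1) \<open>z \<in> l'\<close>] by simp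
        then show ?thesis using zA \<open>z \<in> V\<close> unfolding A_def N_def by auto
      next
        assume zB: "z \<in> B"
        then have "E y2 z" "z \<in> l" "z \<in> V" unfolding B_def N_def by auto
        then have "z \<noteq> y1" using ne2 sym by auto
        then have "E y1 z" using line_adj[OF lL(1) y1(1) \<open>z \<in> l\<close>] by simp
        then show ?thesis using zB \<open>z \<in> V\<close> unfolding B_def N_def by auto
      qed
    qed
  qed
  have fA: "finite A" "finite B" unfolding A_def B_def using N_fin by auto
  have dAB: "A \<inter> B = {}" unfolding A_def B_def using Lx_disj[OF l l' ne] by auto
  have xAB: "x \<notin> A \<union> B" unfolding A_def B_def by auto
  have "card (insert x (A \<union> B)) = 1 + card A + card B"
    using fA dAB xAB by (simp add: card_Un_disjoint)
  moreover have "card (insert x (A \<union> B)) \<le> card (N y1 \<inter> N y2)" using sub N_fin by (intro card_mono) auto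
  ultimately show ?thesis using cN unfolding A_def B_def by simp
qed

lemma part3:
  assumes cc: "c = int_c V E 2" and x: "x \<in> V" and rs: "card (Lx x) = s"
  shows "int s * (int_a V E 1 + 1) - int k \<le> (int c - 1) * int (s choose 2)"
proof -
  obtain y where y: "\<forall>l\<in>Lx x. y l \<in> l \<and> y l \<noteq> x" "\<forall>l\<in>Lx x. \<forall>l'\<in>Lx x. l \<noteq> l' \<longrightarrow> \<not> E (y l) (y l')"
    using reps[OF x rs] by blast
  define m where "m l l' = int (card (N (y l) \<inter> (l' - {x})))" for l l'
  define T where "T = (\<Sum>l\<in>Lx x. \<Sum>l'\<in>Lx x - {l}. m l l')"
  have h1: "(\<Sum>l\<in>Lx x. int_a V E 1 + 2 - int (card l)) \<le> T"
    unfolding T_def m_def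
  proof (rule sum_mono)
    fix l assume l: "l \<in> Lx x"
    have "int_a V E 1 \<le> int (card l) - 2 + (\<Sum>l'\<in>Lx x - {l}. int (card (N (y l) \<inter> (l' - {x}))))"
      using LB[OF x l] y(1) l by auto
    then show "int_a V E 1 + 2 - int (card l) \<le> (\<Sum>l'\<in>Lx x - {l}. int (card (N (y l) \<inter> (l' - {x}))))"
      by linarith
  qed
  have "2 * T = (\<Sum>l\<in>Lx x. \<Sum>l'\<in>Lx x - {l}. m l l') + (\<Sum>l\<in>Lx x. \<Sum>l'\<in>Lx x - {l}. m l' l)"
    unfolding T_def using swap_off[OF Lx_fin, of m] by simp
  also have "\<dots> = (\<Sum>l\<in>Lx x. \<Sum>l'\<in>Lx x - {l}. m l l' + m l' l)" by (simp add: sum.distrib)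
  also have "\<dots> \<le> (\<Sum>l\<in>Lx x. \<Sum>l'\<in>Lx x - {l}. int c - 1)"
  proof (intro sum_mono)
    fix l l' assume l: "l \<in> Lx x" and l': "l' \<in> Lx x - {l}"
    then have "l' \<in> Lx x" "l \<noteq> l'" by auto
    then show "m l l' + m l' l \<le> int c - 1"
      unfolding m_def using pairb[OF cc x l \<open>l' \<in> Lx x\<close> \<open>l \<noteq> l'\<close>] y l by auto
  qed
  also have "\<dots> = int s * (int s - 1) * (int c - 1)"
  proof -
    have "\<And>l. l \<in> Lx x \<Longrightarrow> card (Lx x - {l}) = s - 1" using rs Lx_fin by simp
    then have "(\<Sum>l\<in>Lx x. \<Sum>l'\<in>Lx x - {l}. int c - 1) = (\<Sum>l\<in>Lx x. int (s - 1) * (int c - 1))" by simp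
    also have "\<dots> = int s * (int (s - 1) * (int c - 1))" using rs by simp
    also have "int (s - 1) = int s - 1" using s_ge2 by simp
    finally show ?thesis by (simp add: algebra_simps)
  qed
  finally have T2: "2 * T \<le> int s * (int s - 1) * (int c - 1)" .
  have kx: "int k = (\<Sum>l\<in>Lx x. int (card l) - 1)"
  proof -
    have "int k = int (card (N x))" using deg x by simp
    also have "\<dots> = (\<Sum>l\<in>Lx x. int (card (l - {x})))" using card_N[OF x] by simp
    also have "\<dots> = (\<Sum>l\<in>Lx x. int (card l) - 1)"
    proof (intro sum.cong refl)
      fix l' assume "l' \<in> Lx x"
      then have "x \<in> l'" "finite l'" "l' \<in> L" unfolding Lx_def using line_fin by auto
      moreover have "card l' \<ge> 2" using line_size2 \<open>l' \<in> L\<close> by simp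
      ultimately show "int (card (l' - {x})) = int (card l') - 1" by (simp add: of_nat_diff)
    qed
    finally show ?thesis .
  qed
  have "int s * (int_a V E 1 + 1) - int k = (\<Sum>l\<in>Lx x. int_a V E 1 + 2 - int (card l))"
    unfolding kx using rs by (simp add: sum_subtractf sum.distrib algebra_simps)
  then have "int s * (int_a V E 1 + 1) - int k \<le> T" using h1 by simp
  then have "2 * (int s * (int_a V E 1 + 1) - int k) \<le> 2 * T" by simp
  then have "2 * (int s * (int_a V E 1 + 1) - int k) \<le> int s * (int s - 1) * (int c - 1)"
    using T2 by linarith
  also have "\<dots> = 2 * ((int c - 1) * int (s choose 2))" unfolding two_choose[of s, symmetric] by (simp add: algebra_simps)
  finally show ?thesis by simp
qed

end

theorem lemma12:
  fixes V :: "'a set" and E :: "'a \<Rightarrow> 'a \<Rightarrow> bool" and s :: nat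
  assumes "distance_regular V E" and "diameter_ge2 V E"
    and "s \<ge> 2" and "SPLS_s V E s"
  shows "- theta_min V E \<le> real s
    \<and> (- theta_min V E = real s \<longrightarrow> geometric V E)
    \<and> (\<forall>\<sigma>::nat. \<sigma> \<ge> 2 \<and> SPLS_s V E \<sigma> \<and> (\<forall>t. 2 \<le> t \<and> t < \<sigma> \<longrightarrow> \<not> SPLS_s V E t) \<longrightarrow>
         int \<sigma> * (int_a V E 1 + 1) - int (valency V E)
           \<le> (int (int_c V E 2) - 1) * int (\<sigma> choose 2)
         \<and> real \<sigma> \<ge> - theta_min V E)"
proof -
  interpret drg V E using assms(1,2) by unfold_locales
  have sp: "SPLS V E (int_c V E 2) s" using assms(4) unfolding SPLS_s_def .
  interpret S: spls V E "int_c V E 2" s using assms(1,2) sp by (simp add: spls_def spls_axioms_def drg_def)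
  have p3: "int \<sigma> * (int_a V E 1 + 1) - int (valency V E)
           \<le> (int (int_c V E 2) - 1) * int (\<sigma> choose 2)
         \<and> real \<sigma> \<ge> - theta_min V E"
    if s2: "\<sigma> \<ge> 2" and spt: "SPLS_s V E \<sigma>" and mn: "\<forall>t. 2 \<le> t \<and> t < \<sigma> \<longrightarrow> \<not> SPLS_s V E t" for \<sigma>
  proof -
    have sp': "SPLS V E (int_c V E 2) \<sigma>" using spt unfolding SPLS_s_def .
    interpret T: spls V E "int_c V E 2" \<sigma> using assms(1,2) sp' by (simp add: spls_def spls_axioms_def drg_def)
    have "\<exists>x\<in>V. card (T.Lx x) = \<sigma>"
    proof (cases "\<sigma> = 2")
      case True
      obtain x where x: "x \<in> V" using Vne by auto
      then show ?thesis using T.r_ge2[OF x] T.rdeg[OF x] True by (intro bexI[of _ x]) auto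
    next
      case False
      then have s3: "\<sigma> \<ge> 3" using s2 by simp
      show ?thesis
      proof (rule ccontr)
        assume "\<not> ?thesis"
        then have ne: "\<forall>x\<in>V. card (T.Lx x) \<noteq> \<sigma>" by blast
        have "\<forall>x\<in>V. card (T.Lx x) \<le> \<sigma> - 1"
        proof
          fix x assume x: "x \<in> V"
          have "card (T.Lx x) \<le> \<sigma>" using T.rdeg[OF x] .
          then show "card (T.Lx x) \<le> \<sigma> - 1" using ne x by force
        qed
        then have "SPLS V E (int_c V E 2) (\<sigma> - 1)" using T.min_spls s3 by blast
        then have "SPLS_s V E (\<sigma> - 1)" unfolding SPLS_s_def .
        moreover have "2 \<le> \<sigma> - 1" "\<sigma> - 1 < \<sigma>" using s3 by auto
        ultimately show False using mn by blast
      qed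
    qed
    then obtain x where x: "x \<in> V" "card (T.Lx x) = \<sigma>" by blast
    have "int \<sigma> * (int_a V E 1 + 1) - int k \<le> (int (int_c V E 2) - 1) * int (\<sigma> choose 2)"
      using T.part3[OF refl x] .
    moreover have "- theta_min V E \<le> real \<sigma>" by (rule T.part1)
    ultimately show ?thesis by simp
  qed
  show ?thesis using S.part1 S.part2 p3 by blast
qed


end
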